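(* There is an absolute constant $K>0$ such that the following holds. Let $n\ge2$, $V=\{0,1\}^n$, $\mu$ uniform on $V$, $\beta=\log_2(3/2)$, $\varepsilon>0$, and let $(A,B,W)$ be a partition of $V$ with $(1-\varepsilon)/4\le\mu(A)\le(1+\varepsilon)/4$, $\mu(W)\le\varepsilon n^{-\beta}$ and $|\nabla(A,B)|<(1+\varepsilon)2\cdot 2^{n-2}$. Then \[ |\{x\in A: h_{AB}(x)\neq 2\}|\le K\varepsilon |A| . \]
   Context: $V=\{0,1\}^n$ is the vertex set of the Hamming cube $Q_n$. $d_T(x)$ is the number of neighbors of $x$ in $T$. For disjoint $A,B$, $h_{AB}(x)=d_B(x)$ if $x\in A$ and $h_{AB}(x)=0$ otherwise. $\nabla(A,B)$ is the set of adjacent pairs $(x,y)$ with $x\in A$, $y\in B$. *)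

theory Defs
  imports Complex_Main
begin

definition cube :: "nat \<Rightarrow> bool list set" where
  "cube n = {x. length x = n}"

definition adj :: "bool list \<Rightarrow> bool list \<Rightarrow> bool" where
  "adj x y \<longleftrightarrow> length x = length y \<and> card {i. i < length x \<and> x ! i \<noteq> y ! i} = 1"

definition deg_in :: "bool list set \<Rightarrow> bool list \<Rightarrow> nat" where
  "deg_in T x = card {y \<in> T. adj x y}"

definition h_AB :: "bool list set \<Rightarrow> bool list set \<Rightarrow> bool list \<Rightarrow> nat" where
  "h_AB A B x = (if x \<in> A then deg_in B x else 0)"

definition nabla :: "bool list set \<Rightarrow> bool list set \<Rightarrow> (bool list \<times> bool list) set" where
  "nabla A B = {(x, y). x \<in> A \<and> y \<in> B \<and> adj x y}"

definition mu :: "nat \<Rightarrow> bool list set \<Rightarrow> real" where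
  "mu n S = real (card (S \<inter> cube n)) / 2 ^ n"

end

theory Submission
  imports Defs
begin


fun psi :: "nat \<Rightarrow> real" where
  "psi 0 = 0"
| "psi (Suc 0) = 1"
| "psi (Suc (Suc 0)) = 3/2"
| "psi (Suc (Suc (Suc k))) = psi (Suc (Suc k)) + (2/3) / psi (Suc (Suc k))"

declare psi.simps(4)[simp del]
lemma psi_rec: "psi (Suc (Suc (Suc k))) = psi (Suc (Suc k)) + (2/3) / psi (Suc (Suc k))"
  by (rule psi.simps(4))

lemma psi_ge2: "psi (Suc (Suc k)) \<ge> 3/2"
proof (induction k)
  case 0 then show ?case by simp
next
  case (Suc k)
  have "0 \<le> (2/3) / psi (Suc (Suc k))" using Suc by simp
  then show ?case unfolding psi_rec using Suc by linarith
qed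

lemma psi_step3: "psi (Suc (Suc k)) \<le> psi (Suc (Suc (Suc k)))"
proof -
  have "0 \<le> (2/3) / psi (Suc (Suc k))" using psi_ge2[of k] by simp
  then show ?thesis unfolding psi_rec by linarith
qed

lemma psi_step_ge: "psi h \<le> psi (Suc h)"
proof (cases h rule: psi.cases)
  case (3) then show ?thesis using psi_step3[of 0] by simp
next
  case (4 k) then show ?thesis using psi_step3[of "Suc k"] by simp
qed auto

lemma psi_nonneg: "psi h \<ge> 0"
proof (induction h)
  case (Suc h) then show ?case using psi_step_ge[of h] by linarith
qed simp

lemma psi_mono: "a \<le> b \<Longrightarrow> psi a \<le> psi b"
proof (induction b rule: dec_induct)
  case (step n) then show ?case using psi_step_ge[of n] by linarith
qed simp

definition g :: "nat \<Rightarrow> real" where "g h = psi (Suc h) - psi h"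

lemma psi_g_big: "g (Suc (Suc k)) = (2/3) / psi (Suc (Suc k))"
  unfolding g_def psi_rec by simp

lemma g2: "g 2 = 4/9"
  using psi_g_big[of 0] by (simp add: numeral_2_eq_2)

lemma g_step3: "g (Suc (Suc (Suc k))) \<le> g (Suc (Suc k))"
proof -
  let ?p = "psi (Suc (Suc (Suc k)))" and ?q = "psi (Suc (Suc k))"
  have pq: "?q \<le> ?p" using psi_step_ge by blast
  have q: "?q \<ge> 3/2" by (rule psi_ge2)
  have "(2/3) / ?p \<le> (2/3) / ?q" using pq q by (intro divide_left_mono) auto
  then show ?thesis using psi_g_big[of k] psi_g_big[of "Suc k"] by simp
qed

lemma g_step: "g (Suc h) \<le> g h"
proof (cases h rule: psi.cases)
  case 1 then show ?thesis by (simp add: g_def)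
next
  case 2 then show ?thesis using g2 by (simp add: g_def numeral_2_eq_2)
next
  case 3 then show ?thesis using g_step3[of 0] by simp
next
  case (4 k) then show ?thesis using g_step3[of "Suc k"] by simp
qed

lemma g_anti: "a \<le> b \<Longrightarrow> g b \<le> g a"
proof (induction b rule: dec_induct)
  case (step n) then show ?case using g_step[of n] by linarith
qed simp

lemma psi_conc: "a \<le> b \<Longrightarrow> psi (b + k) - psi b \<le> psi (a + k) - psi a"
proof (induction k)
  case 0 then show ?case by simp
next
  case (Suc k)
  have "g (b + k) \<le> g (a + k)" using Suc by (intro g_anti) simp
  then show ?case using Suc by (simp add: g_def)
qed

lemma psi_major:
  assumes "hU \<le> h0" "hU \<le> h1" "h0 + h1 = hU + hI"
  shows "psi hU + psi hI \<le> psi h0 + psi h1"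
proof -
  define k where "k = h0 - hU"
  have "psi (h1 + k) - psi h1 \<le> psi (hU + k) - psi hU" using assms by (intro psi_conc)
  moreover have "h1 + k = hI" "hU + k = h0" using assms by (auto simp: k_def)
  ultimately show ?thesis by simp
qed


lemma psi_cases3:
  "h = 0 \<or> h = 1 \<or> (psi h \<ge> 3/2 \<and> g h = (2/3) / psi h)"
proof (cases h)
  case (Suc m) then show ?thesis
  proof (cases m)
    case (Suc k) then show ?thesis using \<open>h = Suc m\<close> psi_ge2[of k] psi_g_big[of k] by simp
  qed simp
qed simp

lemma psi_casesE:
  obtains "h = 0" | "h = 1" | "psi h \<ge> 3/2" "g h = (2/3) / psi h"
proof (cases h)
  case (Suc m) then show ?thesis
  proof (cases m)
    case (Suc k) then show ?thesis using \<open>h = Suc m\<close> psi_ge2[of k] psi_g_big[of k] that by simp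
  qed (use that in simp)
qed (use that in simp)

lemma R3:
  fixes x y :: real
  assumes "0 \<le> y" "y \<le> x" "x \<le> 1"
  shows "\<exists>\<theta>. 0 \<le> \<theta> \<and> \<theta> \<le> 1 \<and> (\<forall>h. (x+y)*(2-x-y) \<le> 2*y*(1-y) + 2*\<theta>*x*(1-x) + (x-y)*(psi (Suc h) - \<theta> * psi h))"
proof -
  define d where "d = x - y"
  have key: "(x+y)*(2-x-y) - (2*y*(1-y) + 2*\<theta>*x*(1-x) + (x-y)*(psi (Suc h) - \<theta> * psi h))
     = d*d + (1-\<theta>)*(2*x*(1-x)) - d * (g h + (1-\<theta>) * psi h)" for \<theta> h
    by (simp add: d_def g_def algebra_simps)
  have d0: "0 \<le> d" using assms by (simp add: d_def)
  show ?thesis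
  proof (cases "d \<le> 1/2")
    case True
    have q: "2*x*(1-x) \<le> 1/2"
    proof -
      have "0 \<le> (x - 1/2)^2" by simp
      then show ?thesis by (simp add: power2_eq_square algebra_simps)
    qed
    have H: "2*d \<le> g h + 2*d*d*psi h" for h
    proof -
      show ?thesis
      proof (cases rule: psi_casesE[of h])
        case 1 then show ?thesis using True by (simp add: g_def)
      next
        case 2
        have "0 \<le> (d - 1/2)^2" by simp
        then have "2*d \<le> 1/2 + 2*d*d" by (simp add: power2_eq_square algebra_simps)
        then show ?thesis using 2 by (simp add: g_def)
      next
        case 3
        let ?p = "psi h"
        have p: "?p \<ge> 3/2" using 3 by simp
        have "0 \<le> (d * ?p - 1/2)^2" by simp
        hence "2*d*?p \<le> 2/3 + 2*d*d*?p*?p" by (simp add: power2_eq_square algebra_simps)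
        also have "\<dots> = ((2/3)/?p + 2*d*d*?p) * ?p" using p by (simp add: field_simps)
        finally have "2*d*?p \<le> ((2/3)/?p + 2*d*d*?p) * ?p" .
        hence "2*d \<le> (2/3)/?p + 2*d*d*?p" using p by simp
        then show ?thesis using 3 by simp
      qed
    qed
    show ?thesis
    proof (intro exI[of _ "1 - 2*d*d"] conjI allI)
      have "d*d \<le> (1/2)*(1/2)" using True d0 by (intro mult_mono) auto
      then show "0 \<le> 1 - 2*d*d" by simp
      show "1 - 2*d*d \<le> 1" by simp
      fix h
      have "d*d + (2*d*d)*(2*x*(1-x)) \<le> d*d + (2*d*d)*(1/2)"
        using q d0 by (intro add_left_mono mult_left_mono) auto
      also have "\<dots> = d * (2*d)" by simp
      also have "\<dots> \<le> d * (g h + 2*d*d*psi h)" using H d0 by (intro mult_left_mono) auto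
      finally have "d*d + (1-(1-2*d*d))*(2*x*(1-x)) - d * (g h + (1-(1-2*d*d)) * psi h) \<le> 0"
        by simp
      then show "(x+y)*(2-x-y) \<le> 2*y*(1-y) + 2*(1-2*d*d)*x*(1-x) + (x-y)*(psi (Suc h) - (1-2*d*d) * psi h)"
        using key[of "1-2*d*d" h] by linarith
    qed
  next
    case False
    have q: "2*x*(1-x) \<le> 2*d*(1-d)"
    proof -
      have "0 \<le> (x - d) * (x + d - 1)" using False assms by (intro mult_nonneg_nonneg) (auto simp: d_def)
      then show ?thesis by (simp add: algebra_simps)
    qed
    have H: "1 \<le> g h + psi h / 2" for h
    proof -
      show ?thesis
      proof (cases rule: psi_casesE[of h])
        case 3
        let ?p = "psi h"
        have p: "?p \<ge> 3/2" using 3 by simp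
        have "0 \<le> (?p - 1)^2" by simp
        hence "?p \<le> 2/3 + ?p*?p/2" by (simp add: power2_eq_square algebra_simps)
        also have "\<dots> = ((2/3)/?p + ?p/2) * ?p" using p by (simp add: field_simps)
        finally have "?p \<le> ((2/3)/?p + ?p/2) * ?p" .
        hence "1 \<le> (2/3)/?p + ?p/2" using p by simp
        then show ?thesis using 3 by simp
      qed (auto simp: g_def)
    qed
    show ?thesis
    proof (intro exI[of _ "1/2"] conjI allI)
      fix h
      have "d*d + (1/2)*(2*x*(1-x)) \<le> d*d + (1/2)*(2*d*(1-d))" using q by simp
      also have "\<dots> = d * 1" by (simp add: algebra_simps)
      also have "\<dots> \<le> d * (g h + psi h / 2)" using H d0 by (intro mult_left_mono) auto
      finally have "d*d + (1-1/2)*(2*x*(1-x)) - d * (g h + (1-1/2) * psi h) \<le> 0"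
        by (simp add: algebra_simps)
      then show "(x+y)*(2-x-y) \<le> 2*y*(1-y) + 2*(1/2)*x*(1-x) + (x-y)*(psi (Suc h) - (1/2) * psi h)"
        using key[of "1/2" h] by linarith
    qed auto
  qed
qed

lemma psi_sq: "psi h * psi h \<le> 2 * real h"
proof (induction h rule: psi.induct)
  case (4 k)
  let ?p = "psi (Suc (Suc k))"
  have p: "?p \<ge> 3/2" by (rule psi_ge2)
  have "(2/3)/?p \<le> 4/9" using p by (simp add: divide_simps)
  moreover have "0 \<le> (2/3)/?p" using p by simp
  ultimately have "((2/3)/?p) * ((2/3)/?p) \<le> 4/9 * (4/9)" by (intro mult_mono) auto
  moreover have "(?p + (2/3)/?p) * (?p + (2/3)/?p) = ?p*?p + 4/3 + ((2/3)/?p) * ((2/3)/?p)"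
    using p by (simp add: algebra_simps)
  ultimately show ?case using 4 unfolding psi_rec by simp
qed auto

lemma psi_line: "psi h + (if h = 2 then 0 else 1/100) \<le> 27/50 + (12/25) * real h"
proof -
  have big: "psi (Suc (Suc (Suc k))) \<le> 35/18 + (4/9) * real k" for k
  proof (induction k)
    case 0 then show ?case using psi_g_big[of 0] by (simp add: g_def)
  next
    case (Suc k)
    have "g (Suc (Suc (Suc k))) \<le> g 2" by (intro g_anti) simp
    then have e: "psi (Suc (Suc (Suc (Suc k)))) - psi (Suc (Suc (Suc k))) \<le> 4/9"
      using g2 by (simp add: g_def)
    show ?case using Suc.IH e by (simp add: ring_distribs)
  qed
  show ?thesis
  proof (cases h rule: psi.cases)
    case (4 k)
    have hk: "real h = real k + 3" "h \<noteq> 2" using 4 by auto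
    have "psi h \<le> 35/18 + 4/9 * real k" using big[of k] 4 by simp
    moreover have k0: "0 \<le> real k" by simp
    ultimately have "psi h + 1/100 \<le> 27/50 + 12/25 * real h" unfolding hk(1) by (simp add: ring_distribs)
    then show ?thesis using hk(2) by simp
  qed auto
qed



definition flip :: "bool list \<Rightarrow> nat \<Rightarrow> bool list" where
  "flip x i = x[i := \<not> x ! i]"

definition hh :: "bool list set \<Rightarrow> bool list \<Rightarrow> nat" where
  "hh S x = card {i. i < length x \<and> flip x i \<notin> S}"

definition FF :: "bool list set \<Rightarrow> real" where
  "FF S = (\<Sum>x\<in>S. psi (hh S x))"

lemma cube_eq: "cube n = {xs. set xs \<subseteq> UNIV \<and> length xs = n}"
  by (simp add: cube_def)

lemma finite_cube: "finite (cube n)"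
  unfolding cube_eq by (rule finite_lists_length_eq) simp

lemma card_cube: "card (cube n) = 2 ^ n"
  unfolding cube_eq by (subst card_lists_length_eq) simp_all

lemma flip_Cons0: "flip (b # x) 0 = (\<not> b) # x"
  by (simp add: flip_def)

lemma flip_ConsSuc: "flip (b # x) (Suc j) = b # flip x j"
  by (simp add: flip_def)

lemma card_less_Suc:
  "card {i. i < Suc n \<and> P i} = (if P 0 then 1 else 0) + card {j. j < n \<and> P (Suc j)}"
proof -
  have ci: "card (Suc ` {j. j < n \<and> P (Suc j)}) = card {j. j < n \<and> P (Suc j)}"
    by (rule card_image) simp
  show ?thesis
  proof (cases "P 0")
    case True
    have eq: "{i. i < Suc n \<and> P i} = insert 0 (Suc ` {j. j < n \<and> P (Suc j)})"
      using True by (auto simp: less_Suc_eq_0_disj)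
    show ?thesis unfolding eq using True ci by (subst card_insert_disjoint) auto
  next
    case False
    have eq: "{i. i < Suc n \<and> P i} = Suc ` {j. j < n \<and> P (Suc j)}"
      using False by (auto simp: less_Suc_eq_0_disj)
    show ?thesis unfolding eq using False ci by simp
  qed
qed

lemma hh_Cons: "hh S (b # x) = (if (\<not> b) # x \<in> S then 0 else 1) + hh {y. b # y \<in> S} x"
  unfolding hh_def by (simp add: card_less_Suc flip_Cons0 flip_ConsSuc)

lemma hh_le: "hh S x \<le> length x"
proof -
  have "{i. i < length x \<and> flip x i \<notin> S} \<subseteq> {..<length x}" by auto
  then show ?thesis unfolding hh_def by (metis card_lessThan card_mono finite_lessThan)
qed

lemma hh_anti: "T \<subseteq> S \<Longrightarrow> hh S x \<le> hh T x"
  unfolding hh_def by (rule card_mono) auto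

lemma hh_UI: "hh (A \<inter> B) x + hh (A \<union> B) x = hh A x + hh B x"
proof -
  let ?P = "\<lambda>T. {i. i < length x \<and> flip x i \<notin> T}"
  have "?P (A \<inter> B) = ?P A \<union> ?P B" "?P (A \<union> B) = ?P A \<inter> ?P B" by auto
  moreover have "card (?P A \<union> ?P B) + card (?P A \<inter> ?P B) = card (?P A) + card (?P B)"
    using card_Un_Int[of "?P A" "?P B"] by auto
  ultimately show ?thesis unfolding hh_def by simp
qed


lemma FF_nonneg: "0 \<le> FF S"
  unfolding FF_def by (intro sum_nonneg) (simp add: psi_nonneg)

lemma sum_restrict: "finite U \<Longrightarrow> B \<subseteq> U \<Longrightarrow> (\<Sum>y\<in>U. if y \<in> B then f y else 0) = sum f B"
  by (metis (no_types) Int_absorb1 inf.commute sum.inter_restrict)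

lemma cube_Suc_decomp:
  assumes "S \<subseteq> cube (Suc n)"
  shows "S = Cons False ` {y. False # y \<in> S} \<union> Cons True ` {y. True # y \<in> S}"
proof
  show "S \<subseteq> Cons False ` {y. False # y \<in> S} \<union> Cons True ` {y. True # y \<in> S}"
  proof
    fix z assume z: "z \<in> S"
    then have "length z = Suc n" using assms by (auto simp: cube_def)
    then obtain b y where "z = b # y" by (cases z) auto
    then show "z \<in> Cons False ` {y. False # y \<in> S} \<union> Cons True ` {y. True # y \<in> S}"
      using z by (cases b) auto
  qed
qed auto

lemma aux_lin: "(X::real) \<le> Y + Z + W \<Longrightarrow> X - Y - Z \<le> W" by linarith

lemma KP: "S \<subseteq> cube n \<Longrightarrow> 2 * real (card S) * (2^n - real (card S)) / 2^n \<le> FF S"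
proof (induction n arbitrary: S)
  case 0
  have "cube 0 = {[]}" by (auto simp: cube_def)
  then have "S = {} \<or> S = {[]}" using 0 by auto
  then show ?case using FF_nonneg[of S] by auto
next
  case (Suc n S)
  define S0 where "S0 = {y. False # y \<in> S}"
  define S1 where "S1 = {y. True # y \<in> S}"
  define I where "I = S0 \<inter> S1"
  define U where "U = S0 \<union> S1"
  have S0c: "S0 \<subseteq> cube n" and S1c: "S1 \<subseteq> cube n" using Suc.prems by (auto simp: S0_def S1_def cube_def)
  have Uc: "U \<subseteq> cube n" and Ic: "I \<subseteq> cube n" using S0c S1c by (auto simp: U_def I_def)
  have finU: "finite U" and finI: "finite I" and fin0: "finite S0" and fin1: "finite S1"
    using Uc Ic S0c S1c finite_cube finite_subset by blast+
  have IU: "I \<subseteq> U" by (auto simp: I_def U_def)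
  have Sdec: "S = Cons False ` S0 \<union> Cons True ` S1"
    unfolding S0_def S1_def by (rule cube_Suc_decomp[OF Suc.prems])
  define f0 where "f0 y = psi (hh S (False # y))" for y
  define f1 where "f1 y = psi (hh S (True # y))" for y
  have FS: "FF S = sum f0 S0 + sum f1 S1"
  proof -
    have "FF S = (\<Sum>x\<in>Cons False ` S0. psi (hh S x)) + (\<Sum>x\<in>Cons True ` S1. psi (hh S x))"
      unfolding FF_def Sdec using fin0 fin1 by (intro sum.union_disjoint) auto
    also have "\<dots> = sum f0 S0 + sum f1 S1"
      by (simp add: sum.reindex f0_def f1_def)
    finally show ?thesis .
  qed
  have cardS: "card S = card S0 + card S1"
    unfolding Sdec using fin0 fin1 by (subst card_Un_disjoint) (auto simp: card_image)
  have cardIU: "card I + card U = card S0 + card S1"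
    unfolding I_def U_def using card_Un_Int[OF fin0 fin1] by simp
  have h0: "hh S (False # y) = (if y \<in> S1 then 0 else 1) + hh S0 y" for y
    by (simp add: hh_Cons S0_def S1_def)
  have h1: "hh S (True # y) = (if y \<in> S0 then 0 else 1) + hh S1 y" for y
    by (simp add: hh_Cons S0_def S1_def)
  have pw: "(if y \<in> S0 then f0 y else 0) + (if y \<in> S1 then f1 y else 0)
      \<ge> (if y \<in> I then psi (hh I y) else 0) + psi (hh U y + (if y \<in> I then 0 else 1))"
    if yU: "y \<in> U" for y
  proof -
    have a0: "hh U y \<le> hh S0 y" and a1: "hh U y \<le> hh S1 y"
      by (intro hh_anti; simp add: U_def)+
    have sumh: "hh S0 y + hh S1 y = hh U y + hh I y"
      using hh_UI[of S0 S1 y] by (simp add: I_def U_def)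
    consider "y \<in> S0" "y \<in> S1" | "y \<in> S0" "y \<notin> S1" | "y \<notin> S0" "y \<in> S1"
      using yU by (auto simp: U_def)
    then show ?thesis
    proof cases
      case 1
      then have "y \<in> I" by (simp add: I_def)
      then show ?thesis using 1 psi_major[OF a0 a1 sumh] by (simp add: f0_def f1_def h0 h1)
    next
      case 2
      then have "y \<notin> I" by (simp add: I_def)
      moreover have "psi (hh U y + 1) \<le> psi (1 + hh S0 y)" using a0 by (intro psi_mono) simp
      ultimately show ?thesis using 2 by (simp add: f0_def h0)
    next
      case 3
      then have "y \<notin> I" by (simp add: I_def)
      moreover have "psi (hh U y + 1) \<le> psi (1 + hh S1 y)" using a1 by (intro psi_mono) simp
      ultimately show ?thesis using 3 by (simp add: f1_def h1)
    qed
  qed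
  have step1: "FF I + (\<Sum>y\<in>U. psi (hh U y + (if y \<in> I then 0 else 1))) \<le> FF S"
  proof -
    have "FF I + (\<Sum>y\<in>U. psi (hh U y + (if y \<in> I then 0 else 1)))
        = (\<Sum>y\<in>U. (if y \<in> I then psi (hh I y) else 0) + psi (hh U y + (if y \<in> I then 0 else 1)))"
      unfolding FF_def sum.distrib using sum_restrict[OF finU IU, of "\<lambda>y. psi (hh I y)"] by simp
    also have "\<dots> \<le> (\<Sum>y\<in>U. (if y \<in> S0 then f0 y else 0) + (if y \<in> S1 then f1 y else 0))"
      by (intro sum_mono pw)
    also have "\<dots> = sum f0 S0 + sum f1 S1"
      unfolding sum.distrib using sum_restrict[OF finU, of S0 f0] sum_restrict[OF finU, of S1 f1]
      by (simp add: U_def)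
    finally show ?thesis using FS by simp
  qed
  define M :: real where "M = 2 ^ n"
  have M0: "M > 0" by (simp add: M_def)
  define a where "a = real (card I)"
  define b where "b = real (card U)"
  have ab: "a \<le> b" unfolding a_def b_def using card_mono[OF finU IU] by simp
  have bM: "b \<le> M" unfolding b_def M_def using card_mono[OF finite_cube Uc] card_cube[of n]
    by (metis of_nat_le_iff of_nat_numeral of_nat_power)
  have a0: "0 \<le> a" by (simp add: a_def)
  obtain \<theta> where th0: "0 \<le> \<theta>" and th1: "\<theta> \<le> 1" and thR:
    "\<And>h. (b/M + a/M)*(2 - b/M - a/M) \<le> 2*(a/M)*(1-a/M) + 2*\<theta>*(b/M)*(1-b/M) + (b/M - a/M)*(psi (Suc h) - \<theta> * psi h)"
    using R3[of "a/M" "b/M"] a0 ab bM M0 by (auto simp: divide_right_mono)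
  define R where "R = (b/M + a/M)*(2 - b/M - a/M) - 2*(a/M)*(1-a/M) - 2*\<theta>*(b/M)*(1-b/M)"
  define e where "e y = psi (Suc (hh U y)) - \<theta> * psi (hh U y)" for y
  have step2: "\<theta> * FF U + sum e (U - I) \<le> (\<Sum>y\<in>U. psi (hh U y + (if y \<in> I then 0 else 1)))"
  proof -
    have "\<theta> * FF U + sum e (U - I) = (\<Sum>y\<in>U. \<theta> * psi (hh U y) + (if y \<in> U - I then e y else 0))"
      unfolding FF_def sum.distrib sum_distrib_left using sum_restrict[OF finU, of "U - I" e] by auto
    also have "\<dots> \<le> (\<Sum>y\<in>U. psi (hh U y + (if y \<in> I then 0 else 1)))"
    proof (intro sum_mono)
      fix y assume "y \<in> U"
      show "\<theta> * psi (hh U y) + (if y \<in> U - I then e y else 0) \<le> psi (hh U y + (if y \<in> I then 0 else 1))"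
      proof (cases "y \<in> I")
        case True
        have "\<theta> * psi (hh U y) \<le> 1 * psi (hh U y)" using th1 psi_nonneg by (intro mult_right_mono) auto
        then show ?thesis using True by simp
      qed (use \<open>y \<in> U\<close> in \<open>simp add: e_def\<close>)
    qed
    finally show ?thesis .
  qed
  have step3: "M * R \<le> sum e (U - I)"
  proof (cases "card U = card I")
    case True
    then have "U = I" using card_subset_eq[OF finU IU] by simp
    moreover have "R \<le> 0" using thR[of 0] True by (simp add: R_def a_def b_def)
    ultimately show ?thesis using M0 by (simp add: mult_nonneg_nonpos)
  next
    case False
    then have lt: "a < b" using ab by (simp add: a_def b_def)
    have cd: "real (card (U - I)) = b - a"
      using card_Diff_subset[OF finI IU] card_mono[OF finU IU] by (simp add: a_def b_def of_nat_diff)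
    have "(b/M - a/M) * sum e (U - I) = (\<Sum>y\<in>U - I. (b/M - a/M) * e y)"
      by (simp add: sum_distrib_left)
    also have "\<dots> \<ge> (\<Sum>y\<in>U - I. R)"
    proof (intro sum_mono)
      fix y
      show "R \<le> (b/M - a/M) * e y" unfolding R_def e_def
        by (rule aux_lin[OF thR[of "hh U y"]])
    qed
    finally have "real (card (U - I)) * R \<le> (b/M - a/M) * sum e (U - I)" by simp
    then have "(b - a) * R \<le> ((b - a)/M) * sum e (U - I)" using cd by (simp add: diff_divide_distrib)
    then have "(b - a) * (M * R) \<le> (b - a) * sum e (U - I)" using M0 by (simp add: field_simps)
    then show ?thesis using lt by simp
  qed
  have IHI: "2 * a * (M - a) / M \<le> FF I" using Suc.IH[OF Ic] by (simp add: a_def M_def)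
  have IHU: "2 * b * (M - b) / M \<le> FF U" using Suc.IH[OF Uc] by (simp add: b_def M_def)
  have "FF S \<ge> 2 * a * (M - a) / M + \<theta> * (2 * b * (M - b) / M) + M * R"
    using step1 step2 step3 IHI mult_left_mono[OF IHU th0] by linarith
  also have "2 * a * (M - a) / M + \<theta> * (2 * b * (M - b) / M) + M * R = (a + b) * (2*M - (a + b)) / M"
    unfolding R_def using M0 by (simp add: field_simps)
  finally have fin: "(a + b) * (2*M - (a + b)) / M \<le> FF S" .
  have "real (card S) = a + b" using cardS cardIU by (simp add: a_def b_def)
  then show ?case using fin M0 by (simp add: M_def field_simps)
qed



lemma length_flip[simp]: "length (flip x i) = length x"
  by (simp add: flip_def)

lemma nth_flip: "j < length x \<Longrightarrow> flip x i ! j = (if j = i then \<not> x ! i else x ! j)"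
  by (simp add: flip_def nth_list_update)

lemma adj_flip: "adj x y \<longleftrightarrow> (\<exists>i<length x. y = flip x i)"
proof
  assume a: "adj x y"
  then have len: "length y = length x" by (simp add: adj_def)
  from a have "card {i. i < length x \<and> x ! i \<noteq> y ! i} = 1" unfolding adj_def by blast
  then obtain i where D: "{i. i < length x \<and> x ! i \<noteq> y ! i} = {i}" by (rule card_1_singletonE)
  then have il: "i < length x" and xi: "x ! i \<noteq> y ! i" by auto
  have "y = flip x i"
  proof (rule nth_equalityI)
    show "length y = length (flip x i)" using len by simp
    fix j assume "j < length y"
    then have j: "j < length x" using len by simp
    show "y ! j = flip x i ! j"
    proof (cases "j = i")
      case True then show ?thesis using xi j by (simp add: nth_flip)
    next
      case False
      then have "j \<notin> {i. i < length x \<and> x ! i \<noteq> y ! i}" using D by auto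
      then show ?thesis using False j by (simp add: nth_flip)
    qed
  qed
  then show "\<exists>i<length x. y = flip x i" using il by blast
next
  assume "\<exists>i<length x. y = flip x i"
  then obtain i where il: "i < length x" and y: "y = flip x i" by blast
  have "{j. j < length x \<and> x ! j \<noteq> y ! j} = {i}" using il by (auto simp: y nth_flip split: if_splits)
  then show "adj x y" by (simp add: adj_def y)
qed

lemma flip_inj: "inj_on (flip x) {i. i < length x}"
proof (rule inj_onI)
  fix i j assume i: "i \<in> {i. i < length x}" and j: "j \<in> {i. i < length x}" and eq: "flip x i = flip x j"
  show "i = j"
  proof (rule ccontr)
    assume ne: "i \<noteq> j"
    have "flip x i ! i = flip x j ! i" using eq by simp
    then show False using i ne by (simp add: nth_flip)
  qed
qed

lemma deg_in_flip: "deg_in B x = card {i. i < length x \<and> flip x i \<in> B}"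
proof -
  have "{y \<in> B. adj x y} = flip x ` {i. i < length x \<and> flip x i \<in> B}"
    by (auto simp: adj_flip)
  moreover have "inj_on (flip x) {i. i < length x \<and> flip x i \<in> B}"
    by (rule inj_on_subset[OF flip_inj]) auto
  ultimately show ?thesis unfolding deg_in_def by (simp add: card_image)
qed

lemma flip_cube: "x \<in> cube n \<Longrightarrow> flip x i \<in> cube n"
  by (simp add: cube_def)

lemma hh_deg:
  assumes "A \<union> B \<union> W = cube n" "A \<inter> B = {}" "B \<inter> W = {}" "x \<in> A"
  shows "hh (A \<union> W) x = deg_in B x"
proof -
  have xc: "x \<in> cube n" using assms by auto
  have "{i. i < length x \<and> flip x i \<notin> A \<union> W} = {i. i < length x \<and> flip x i \<in> B}"
    using flip_cube[OF xc] assms(1,2,3) by blast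
  then show ?thesis unfolding hh_def deg_in_flip by simp
qed

lemma card_nabla:
  assumes "finite A" "finite B"
  shows "card (nabla A B) = (\<Sum>x\<in>A. deg_in B x)"
proof -
  have "nabla A B = Sigma A (\<lambda>x. {y \<in> B. adj x y})" by (auto simp: nabla_def)
  then show ?thesis using assms by (simp add: card_SigmaI deg_in_def)
qed



lemma quad:
  fixes e s :: real
  assumes "0 < e" "e \<le> 1/10" "(1 - e)/4 \<le> s" "s \<le> (1 + e)/4 + e"
  shows "3/8 - e \<le> 2 * s * (1 - s)"
proof -
  have s1: "1 - e \<le> 4 * s" using assms(3) by (simp add: field_simps)
  have s2: "4 * s \<le> 1 + 5 * e" using assms(4) by (simp add: field_simps)
  have e1: "10 * e \<le> 1" using assms(2) by simp
  define t where "t = s - 1/4"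
  have eq: "2 * s * (1 - s) = 3/8 + t - 2 * (t * t)" by (simp add: t_def algebra_simps)
  have "t \<le> 1/8" "- t \<le> 1/8" using s1 s2 e1 unfolding t_def by linarith+
  then have tb: "\<bar>t\<bar> \<le> 1/8" by linarith
  have "\<bar>t\<bar> * \<bar>t\<bar> \<le> (1/8) * \<bar>t\<bar>" using tb by (intro mult_right_mono) auto
  then have tt: "t * t \<le> (1/8) * \<bar>t\<bar>" by (simp add: abs_mult[symmetric])
  have tl: "- e/4 \<le> t" using s1 unfolding t_def by linarith
  show ?thesis
  proof (cases "t \<ge> 0")
    case True
    then have "t * t \<le> (1/8) * t" using tt by simp
    then show ?thesis unfolding eq using True assms(1) by linarith
  next
    case False
    then have "t * t \<le> (1/8) * (- t)" using tt by simp
    then show ?thesis unfolding eq using False tl assms(1) by linarith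
  qed
qed

lemma beta_half: "1/2 \<le> log 2 (3/2)"
proof -
  have "(2 powr (1/2::real))^2 \<le> (3/2::real)^2"
    by (simp add: powr_half_sqrt power2_eq_square)
  then have "2 powr (1/2::real) \<le> 3/2" by (rule power2_le_imp_le) simp
  then show ?thesis by (subst le_log_iff) auto
qed

lemma nb_facts:
  fixes n :: nat assumes "n \<ge> 1"
  shows "real n powr (- log 2 (3/2)) \<le> 1"
    and "(real n powr (- log 2 (3/2)))^2 * real n \<le> 1"
    and "0 \<le> real n powr (- log 2 (3/2))"
proof -
  let ?b = "log 2 (3/2)"
  have n1: "1 \<le> real n" using assms by simp
  have b: "1/2 \<le> ?b" by (rule beta_half)
  show "real n powr (- ?b) \<le> 1"
    using powr_mono[of "- ?b" 0 "real n"] n1 b by simp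
  have "(real n powr (- ?b))^2 = real n powr (- 2 * ?b)"
    using n1 by (simp add: power2_eq_square powr_add[symmetric])
  also have "\<dots> \<le> real n powr (-1)" using powr_mono[of "- 2 * ?b" "-1" "real n"] n1 b by simp
  also have "\<dots> = 1 / real n" using n1 by (simp add: powr_minus_divide)
  finally show "(real n powr (- ?b))^2 * real n \<le> 1" using n1 by (simp add: field_simps)
  show "0 \<le> real n powr (- ?b)" by simp
qed


lemma main_small:
  fixes n :: nat and \<epsilon> :: real and A B W :: "bool list set"
  assumes n2: "n \<ge> 2" and e0: "\<epsilon> > 0" and e1: "\<epsilon> \<le> 1/10"
    and part: "A \<union> B \<union> W = cube n" and dAB: "A \<inter> B = {}" and dAW: "A \<inter> W = {}" and dBW: "B \<inter> W = {}"
    and mA1: "(1 - \<epsilon>) / 4 \<le> mu n A" and mA2: "mu n A \<le> (1 + \<epsilon>) / 4"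
    and mW: "mu n W \<le> \<epsilon> * real n powr (- log 2 (3/2))"
    and nab: "real (card (nabla A B)) < (1 + \<epsilon>) * 2 * 2 ^ (n - 2)"
  shows "real (card {x \<in> A. h_AB A B x \<noteq> 2}) \<le> 1500 * \<epsilon> * real (card A)"
proof -
  define N :: real where "N = 2 ^ n"
  have N0: "N > 0" by (simp add: N_def)
  have Ac: "A \<subseteq> cube n" and Bc: "B \<subseteq> cube n" and Wc: "W \<subseteq> cube n" using part by auto
  have finA: "finite A" and finB: "finite B" and finW: "finite W"
    using Ac Bc Wc finite_cube finite_subset by blast+
  define nb where "nb = real n powr (- log 2 (3/2))"
  have n1: "n \<ge> 1" using n2 by simp
  note nbf = nb_facts[OF n1, folded nb_def]
  define an where "an = real (card A) / N"
  define wn where "wn = real (card W) / N"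
  define gn where "gn = real (card (nabla A B)) / N"
  define Bad where "Bad = {x \<in> A. deg_in B x \<noteq> 2}"
  have Bad_eq: "{x \<in> A. h_AB A B x \<noteq> 2} = Bad" by (auto simp: Bad_def h_AB_def)
  define bn where "bn = real (card Bad) / N"
  define PA where "PA = (\<Sum>x\<in>A. psi (deg_in B x))"
  define pn where "pn = PA / N"
  have muA: "mu n A = an" using Ac by (simp add: mu_def an_def N_def Int_absorb2)
  have muW: "mu n W = wn" using Wc by (simp add: mu_def wn_def N_def Int_absorb2)
  have an1: "1 - \<epsilon> \<le> 4 * an" using mA1 muA by (simp add: field_simps)
  have an2: "4 * an \<le> 1 + \<epsilon>" using mA2 muA by (simp add: field_simps)
  have wn0: "0 \<le> wn" by (simp add: wn_def N0 less_imp_le)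
  have wn1: "wn \<le> \<epsilon> * nb" using mW muW by (simp add: nb_def)
  have "\<epsilon> * nb \<le> \<epsilon> * 1" using nbf(1) e0 by (intro mult_left_mono) auto
  then have wn2: "wn \<le> \<epsilon>" using wn1 by simp
  have pow: "(2::real) * 2 ^ (n - 2) = N / 2"
  proof -
    obtain m where m: "n = m + 2" using n2 by (metis add.commute le_Suc_ex)
    show ?thesis by (simp add: N_def m power_add)
  qed
  have gn1: "2 * gn < 1 + \<epsilon>"
  proof -
    have eqp: "(1 + \<epsilon>) * 2 * 2 ^ (n - 2) = (1 + \<epsilon>) * (N / 2)" by (metis pow mult.assoc)
    have "real (card (nabla A B)) < (1 + \<epsilon>) * (N / 2)" using nab unfolding eqp .
    then show ?thesis using N0 by (simp add: gn_def field_simps)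
  qed
  have up: "PA + card Bad / 100 \<le> 27/50 * real (card A) + 12/25 * real (card (nabla A B))"
  proof -
    have sB: "(\<Sum>x\<in>A. if x \<in> Bad then (1/100::real) else 0) = real (card Bad) / 100"
      using sum_restrict[OF finA, of Bad "\<lambda>_. 1/100::real"] by (simp add: Bad_def)
    have "PA + card Bad / 100 = (\<Sum>x\<in>A. psi (deg_in B x) + (if x \<in> Bad then 1/100 else 0))"
      unfolding PA_def sum.distrib sB by simp
    also have "\<dots> \<le> (\<Sum>x\<in>A. 27/50 + 12/25 * real (deg_in B x))"
    proof (intro sum_mono)
      fix x assume "x \<in> A"
      show "psi (deg_in B x) + (if x \<in> Bad then 1/100 else 0) \<le> 27/50 + 12/25 * real (deg_in B x)"
      proof -
        have e: "(if x \<in> Bad then (1/100::real) else 0) = (if deg_in B x = 2 then 0 else 1/100)"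
          using \<open>x \<in> A\<close> by (auto simp: Bad_def)
        show ?thesis unfolding e by (rule psi_line)
      qed
    qed
    also have "\<dots> = 27/50 * real (card A) + 12/25 * real (card (nabla A B))"
      by (simp add: sum.distrib sum_distrib_left card_nabla[OF finA finB])
    finally show ?thesis .
  qed
  have up2: "pn + bn / 100 \<le> 27/50 * an + 12/25 * gn"
  proof -
    have "(PA + card Bad / 100) / N \<le> (27/50 * real (card A) + 12/25 * real (card (nabla A B))) / N"
      using up N0 by (intro divide_right_mono) auto
    then show ?thesis by (simp add: pn_def bn_def an_def gn_def add_divide_distrib)
  qed
  define S where "S = A \<union> W"
  have Sc: "S \<subseteq> cube n" using Ac Wc by (simp add: S_def)
  have cardS: "card S = card A + card W" unfolding S_def using finA finW dAW by (simp add: card_Un_disjoint)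
  have FFS: "FF S = (\<Sum>x\<in>A. psi (hh S x)) + (\<Sum>x\<in>W. psi (hh S x))"
    unfolding FF_def S_def using finA finW dAW by (simp add: sum.union_disjoint)
  have FA: "(\<Sum>x\<in>A. psi (hh S x)) = PA"
    unfolding PA_def S_def using hh_deg[OF part dAB dBW] by simp
  have psiW: "psi (hh S x) \<le> sqrt (2 * real n)" if "x \<in> W" for x
  proof -
    have "length x = n" using that Wc by (auto simp: cube_def)
    then have "hh S x \<le> n" using hh_le[of S x] by simp
    then have "psi (hh S x) * psi (hh S x) \<le> 2 * real n" using psi_sq[of "hh S x"] by simp
    then show ?thesis by (intro real_le_rsqrt) (simp add: power2_eq_square)
  qed
  have FW: "(\<Sum>x\<in>W. psi (hh S x)) \<le> real (card W) * sqrt (2 * real n)"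
    using sum_mono[of W "\<lambda>x. psi (hh S x)" "\<lambda>_. sqrt (2 * real n)"] psiW by simp
  have nbs: "nb * sqrt (2 * real n) \<le> 2"
  proof -
    have "(nb * sqrt (2 * real n))^2 = 2 * (nb^2 * real n)" by (simp add: power_mult_distrib)
    also have "\<dots> \<le> 2^2" using nbf(2) by (simp add: mult.commute)
    finally show ?thesis by (rule power2_le_imp_le) simp
  qed
  have FW2: "(\<Sum>x\<in>W. psi (hh S x)) / N \<le> 2 * \<epsilon>"
  proof -
    have "(\<Sum>x\<in>W. psi (hh S x)) / N \<le> real (card W) * sqrt (2 * real n) / N"
      using FW N0 by (intro divide_right_mono) auto
    also have "\<dots> = wn * sqrt (2 * real n)" by (simp add: wn_def)
    also have "\<dots> \<le> (\<epsilon> * nb) * sqrt (2 * real n)" using wn1 by (intro mult_right_mono) auto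
    also have "\<dots> = \<epsilon> * (nb * sqrt (2 * real n))" by simp
    also have "\<dots> \<le> \<epsilon> * 2" using nbs e0 by (intro mult_left_mono) auto
    finally show ?thesis by simp
  qed
  define sg where "sg = an + wn"
  have KPS: "2 * sg * (1 - sg) \<le> FF S / N"
  proof -
    have "2 * real (card S) * (2^n - real (card S)) / 2^n \<le> FF S" by (rule KP[OF Sc])
    moreover have "real (card S) = sg * N" using cardS N0 by (simp add: sg_def an_def wn_def field_simps)
    ultimately have "2 * (sg * N) * (N - sg * N) / N \<le> FF S" by (simp add: N_def)
    moreover have "2 * (sg * N) * (N - sg * N) / N = (2 * sg * (1 - sg)) * N" using N0 by (simp add: field_simps)
    ultimately have "(2 * sg * (1 - sg)) * N \<le> FF S" by simp
    then show ?thesis using N0 by (simp add: field_simps)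
  qed
  have FFn: "FF S / N \<le> pn + 2 * \<epsilon>"
    using FW2 unfolding FFS FA pn_def add_divide_distrib by simp
  have sg1: "(1 - \<epsilon>)/4 \<le> sg" using an1 wn0 by (simp add: sg_def field_simps)
  have sg2: "sg \<le> (1 + \<epsilon>)/4 + \<epsilon>" using an2 wn2 by (simp add: sg_def field_simps)
  have Q: "3/8 - \<epsilon> \<le> 2 * sg * (1 - sg)" by (rule quad[OF e0 e1 sg1 sg2])
  have "bn / 100 \<le> 27/8 * \<epsilon>"
    using up2 Q KPS FFn an2 gn1 by linarith
  then have bnb: "bn \<le> 1500 * \<epsilon> * (9/40)" by simp
  have an3: "9/40 \<le> an" using an1 e1 by linarith
  have "bn \<le> 1500 * \<epsilon> * an" using bnb an3 e0 by (smt (verit) mult_left_mono)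
  then have "bn * N \<le> 1500 * \<epsilon> * an * N" using N0 by (intro mult_right_mono) auto
  then show ?thesis using N0 Bad_eq by (simp add: bn_def an_def)
qed

theorem mainTheorem11:
  shows "\<exists>K::real. K > 0 \<and>
    (\<forall>(n::nat) (\<epsilon>::real) A B W.
       n \<ge> 2 \<longrightarrow> \<epsilon> > 0 \<longrightarrow>
       A \<union> B \<union> W = cube n \<longrightarrow> A \<inter> B = {} \<longrightarrow> A \<inter> W = {} \<longrightarrow> B \<inter> W = {} \<longrightarrow>
       (1 - \<epsilon>) / 4 \<le> mu n A \<longrightarrow> mu n A \<le> (1 + \<epsilon>) / 4 \<longrightarrow>
       mu n W \<le> \<epsilon> * real n powr (- log 2 (3/2)) \<longrightarrow>
       real (card (nabla A B)) < (1 + \<epsilon>) * 2 * 2 ^ (n - 2) \<longrightarrow>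
       real (card {x \<in> A. h_AB A B x \<noteq> 2}) \<le> K * \<epsilon> * real (card A))"
proof (intro exI[of _ 1500] conjI allI impI)
  fix n :: nat and \<epsilon> :: real and A B W :: "bool list set"
  assume H: "n \<ge> 2" "\<epsilon> > 0" "A \<union> B \<union> W = cube n" "A \<inter> B = {}" "A \<inter> W = {}" "B \<inter> W = {}"
    "(1 - \<epsilon>) / 4 \<le> mu n A" "mu n A \<le> (1 + \<epsilon>) / 4"
    "mu n W \<le> \<epsilon> * real n powr (- log 2 (3/2))"
    "real (card (nabla A B)) < (1 + \<epsilon>) * 2 * 2 ^ (n - 2)"
  show "real (card {x \<in> A. h_AB A B x \<noteq> 2}) \<le> 1500 * \<epsilon> * real (card A)"
  proof (cases "\<epsilon> \<le> 1/10")
    case True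
    show ?thesis by (rule main_small[OF H(1,2) True H(3-10)])
  next
    case False
    have "A \<subseteq> cube n" using H(3) by auto
    then have finA: "finite A" using finite_cube finite_subset by auto
    have "card {x \<in> A. h_AB A B x \<noteq> 2} \<le> card A" using finA by (intro card_mono) auto
    then have c: "real (card {x \<in> A. h_AB A B x \<noteq> 2}) \<le> 1 * real (card A)" by simp
    have "1 * real (card A) \<le> (1500 * \<epsilon>) * real (card A)" using False by (intro mult_right_mono) auto
    then show ?thesis using c by simp
  qed
qed simp


end
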